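(* Let $\gamma>0$, $\rho<0$, $C>0$, and let $F$ be a distribution function whose tail quantile function $Q(t)=F^{\leftarrow}(1-1/t)$ satisfies the von Mises condition: there are $A>0$, $t_0>0$ and a function $b$ with $Q(t)=A t^{\gamma}\exp\int_{t_0}^t \frac{b(u)}{u}\,du$ for $t\ge t_0$, and $\bar b(t):=\sup_{x\ge t}|b(x)|\le C t^{\rho}$ for all $t>0$. For integers $k\ge1$ and $\delta\in(0,1)$ define $V(k,\delta)$ as the $(1-\delta/2)$-quantile of $|Z_k-1|$ where $Z_k\sim\mathrm{Gamma}(\text{shape }k,\text{ rate }k)$, $\tilde V(k,\delta)=\sqrt{2\log(2/\delta)/k}+\log(2/\delta)/k$, $R(k,\delta)=\sqrt{3\log(1/\delta)/k}+3\log(1/\delta)/k$, and $$B(k,n,\delta)=\bigl(1+\tilde V(1,\delta/2)\bigr)\,\bar b\Bigl(\frac{n}{(k+1)\bigl(1+R(1,\delta/2)\bigr)}\Bigr).$$ Let $c_1\in(0,1]$ and $c_2\in(0,2]$ be constants such that $V(k,\delta)\ge c_1\bigl(\sqrt{(0\vee\log(c_2/\delta))/k}+\log(c_2/\delta)/k\bigr)$ for all $k\ge1$, $\delta\in(0,1)$. Let $n\ge1$, let $\mathcal K=\{k_1<k_2<\dots<k_M\}\subset\{1,\dots,n\}$, and let $\delta\in(0,1)$ with $\delta\le c_2^2/4$. Assume (i) $B(k_1,n,\delta)\le\gamma V(k_1,\delta)$ and $B(k_M,n,\delta)>\gamma V(k_M,\delta)$; (ii) there is $\beta>1$ with $k_{m+1}/k_m\le\beta$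 for all $m<M$. Define $k^*(\delta,n)=\max\{k\in\mathcal K: B(k,n,\delta)\le\gamma V(k,\delta)\}$ and $$C_2(\rho)=\Bigl(\frac{4}{21}\Bigr)^2\Bigl(\frac{c_1}{\sqrt2\,C}\Bigr)^{2/(1-2\rho)}.$$ Then, provided $n$ is large enough that $n/2\ge \beta^{-1}\Bigl(\frac{C_2(\rho)\gamma^{2/(1-2\rho)}}{\log(4/\delta)}n^{-2\rho/(1-2\rho)}-1\Bigr)$, $$k^*(\delta,n)\ge\beta^{-1}\Bigl(\frac{C_2(\rho)\,\gamma^{2/(1-2\rho)}}{\log(4/\delta)}\,n^{-2\rho/(1-2\rho)}-1\Bigr).$$
   Context: Here $F^{\leftarrow}$ denotes the generalized inverse of $F$. The functions $V$ and $B$ are the variance and bias terms of a non-asymptotic error bound for the Hill estimator $\hat\gamma(k)=\frac1k\sum_{i=1}^k\log(X_{(i)}/X_{(k+1)})$ (with $X_{(1)}\ge\dots\ge X_{(n)}$ the order statistics of an i.i.d. sample from $F$), specialized to the von Mises setting; $k^*(\delta,n)$ is the corresponding "oracle" extreme sample size on the grid $\mathcal K$. Assumption (i) is the "sufficiently wide grid" condition and (ii) the "fine enough grid" condition. *)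

theory Defs
  imports "HOL-Probability.Probability"
begin

definition is_cdf :: "(real \<Rightarrow> real) \<Rightarrow> bool" where
  "is_cdf F \<longleftrightarrow> mono F \<and> (\<forall>x. continuous (at_right x) F)
     \<and> (F \<longlongrightarrow> 0) at_bot \<and> (F \<longlongrightarrow> 1) at_top"

definition geninv :: "(real \<Rightarrow> real) \<Rightarrow> real \<Rightarrow> real" where
  "geninv F p = Inf {x. F x \<ge> p}"

definition tailQ :: "(real \<Rightarrow> real) \<Rightarrow> real \<Rightarrow> real" where
  "tailQ F t = geninv F (1 - 1 / t)"

definition von_mises :: "(real \<Rightarrow> real) \<Rightarrow> real \<Rightarrow> (real \<Rightarrow> real) \<Rightarrow> bool" where
  "von_mises F \<gamma> b \<longleftrightarrow> (\<exists>A t0. A > 0 \<and> t0 > 0 \<and>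
     (\<forall>t\<ge>t0. set_integrable lborel {t0..t} (\<lambda>u. b u / u) \<and>
        tailQ F t = A * t powr \<gamma> * exp (LBINT u=t0..t. b u / u)))"

definition bsup :: "(real \<Rightarrow> real) \<Rightarrow> real \<Rightarrow> ereal" where
  "bsup b t = (SUP x\<in>{t..}. ereal \<bar>b x\<bar>)"

definition bbar :: "(real \<Rightarrow> real) \<Rightarrow> real \<Rightarrow> real" where
  "bbar b t = real_of_ereal (bsup b t)"

text \<open>Gamma(shape k, rate k) law (k a positive integer: Erlang).\<close>
definition gamma_kk :: "nat \<Rightarrow> real measure" where
  "gamma_kk k = density lborel (\<lambda>x. ennreal (erlang_density (k - 1) (real k) x))"

definition Vq :: "nat \<Rightarrow> real \<Rightarrow> real" where
  "Vq k \<delta> = Inf {x. measure (gamma_kk k) {z. \<bar>z - 1\<bar> \<le> x} \<ge> 1 - \<delta> / 2}"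

definition Vt :: "nat \<Rightarrow> real \<Rightarrow> real" where
  "Vt k \<delta> = sqrt (2 * ln (2 / \<delta>) / real k) + ln (2 / \<delta>) / real k"

definition Rk :: "nat \<Rightarrow> real \<Rightarrow> real" where
  "Rk k \<delta> = sqrt (3 * ln (1 / \<delta>) / real k) + 3 * ln (1 / \<delta>) / real k"

definition Bk :: "(real \<Rightarrow> real) \<Rightarrow> nat \<Rightarrow> nat \<Rightarrow> real \<Rightarrow> real" where
  "Bk b k n \<delta> = (1 + Vt 1 (\<delta> / 2)) *
      bbar b (real n / (real (k + 1) * (1 + Rk 1 (\<delta> / 2))))"

definition kstar :: "(real \<Rightarrow> real) \<Rightarrow> real \<Rightarrow> nat set \<Rightarrow> nat \<Rightarrow> real \<Rightarrow> nat" where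
  "kstar b \<gamma> K n \<delta> = Max {k\<in>K. Bk b k n \<delta> \<le> \<gamma> * Vq k \<delta>}"

definition C2 :: "real \<Rightarrow> real \<Rightarrow> real \<Rightarrow> real" where
  "C2 c1 C \<rho> = (4 / 21)\<^sup>2 * (c1 / (sqrt 2 * C)) powr (2 / (1 - 2 * \<rho>))"

end

theory Submission
  imports Defs
begin

lemma core:
  fixes p L V1 R1 C c1 g n k2 :: real
  assumes p: "p > 0" and L: "L \<ge> 1" and V1: "0 \<le> V1" "(1+V1)*(4/21) \<le> L"
    and R1: "0 \<le> R1" "(1+R1)*(4/21)^2 \<le> L"
    and pos: "C > 0" "c1 > 0" "g > 0" "n > 0" "k2 > 0"
    and h: "k2 powr ((1+2*p)/2) < (4/21) powr (1+2*p) * c1 * g * n powr p / (sqrt 2 * C * L powr ((1+2*p)/2))"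
  shows "(1+V1) * C * (k2*(1+R1)/n) powr p \<le> g * c1 * sqrt L / (sqrt 2 * sqrt k2)"
proof -
  have e1: "(k2*(1+R1)/n) powr p = k2 powr p * (1+R1) powr p / n powr p"
    using pos R1 by (simp add: powr_mult powr_divide)
  have sk: "sqrt k2 = k2 powr (1/2)" using pos by (simp add: powr_half_sqrt)
  have sL: "sqrt L = L powr (1/2)" using L by (simp add: powr_half_sqrt)
  have kk: "k2 powr p * sqrt k2 = k2 powr ((1+2*p)/2)"
    using pos by (simp add: sk powr_add[symmetric] field_simps)
  have LL: "L powr ((1+2*p)/2) * sqrt L = L powr (1+p)"
  proof -
    have "(1+2*p)/2 + 1/2 = 1+p" by (simp add: field_simps)
    then show ?thesis using L by (simp add: sL powr_add[symmetric])
  qed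
  have f: "(4/21::real) powr (1+2*p) = (4/21) * ((4/21)^2) powr p"
  proof -
    have a: "(4/21::real) powr (1+2*p) = (4/21) powr 1 * (4/21) powr (2*p)" by (rule powr_add)
    have b: "((4/21::real) powr 2) powr p = (4/21) powr (2*p)" by (rule powr_powr)
    have c: "(4/21::real) powr 2 = (4/21)^2" by (rule powr_numeral) simp
    show ?thesis unfolding a b[symmetric] c by simp
  qed
  have A: "(1+V1) * (4/21) * (((1+R1)*(4/21)^2) powr p) \<le> L * L powr p"
    apply (rule mult_mono)
    using V1 R1 p L by (auto intro: powr_mono2)
  have "(1+V1) * C * (k2*(1+R1)/n) powr p * (sqrt 2 * sqrt k2)
      = (1+V1) * C * sqrt 2 * (1+R1) powr p / n powr p * k2 powr ((1+2*p)/2)"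
    by (simp add: e1 kk[symmetric])
  also have "\<dots> \<le> (1+V1) * C * sqrt 2 * (1+R1) powr p / n powr p *
     ((4/21) powr (1+2*p) * c1 * g * n powr p / (sqrt 2 * C * L powr ((1+2*p)/2)))"
    using h pos V1 by (intro mult_left_mono) auto
  also have "\<dots> = ((1+V1) * (4/21) * (((1+R1)*(4/21)^2) powr p)) * c1 * g / L powr ((1+2*p)/2)"
  proof -
    have g1: "((1+R1)*(4/21)^2) powr p = (1+R1) powr p * ((4/21)^2) powr p"
      using R1 by (subst powr_mult) auto
    have "n powr p > 0" "L powr ((1+2*p)/2) > 0" using pos L by auto
    then show ?thesis using pos unfolding f g1 by (simp add: field_simps)
  qed
  also have "\<dots> \<le> (L * L powr p) * c1 * g / L powr ((1+2*p)/2)"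
    using A pos L by (intro divide_right_mono mult_right_mono) auto
  also have "\<dots> = g * c1 * sqrt L"
  proof -
    have "L * L powr p = L powr ((1+2*p)/2) * sqrt L" using LL L by (simp add: powr_add)
    then show ?thesis using L by (simp add: field_simps)
  qed
  finally have "(1+V1) * C * (k2*(1+R1)/n) powr p * (sqrt 2 * sqrt k2) \<le> g * c1 * sqrt L" .
  then show ?thesis using pos by (simp add: field_simps)
qed


lemma bbar_le:
  assumes "\<forall>t>0. bsup b t \<le> ereal (C * t powr \<rho>)" "t > 0"
  shows "bbar b t \<le> C * t powr \<rho>"
proof -
  have up: "bsup b t \<le> ereal (C * t powr \<rho>)" using assms by auto
  have lo: "ereal \<bar>b t\<bar> \<le> bsup b t" unfolding bsup_def by (rule SUP_upper) auto
  have "0 \<le> bsup b t" using lo by (rule order_trans[rotated]) simp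
  then show ?thesis using up unfolding bbar_def
    by (cases "bsup b t") auto
qed

lemma Tpow:
  fixes \<rho> C c1 g L n :: real
  assumes "\<rho> < 0" "C > 0" "c1 > 0" "g > 0" "L > 0" "n > 0"
  shows "(C2 c1 C \<rho> * g powr (2 / (1 - 2 * \<rho>)) / L * n powr (- 2 * \<rho> / (1 - 2 * \<rho>)))
           powr ((1 - 2*\<rho>)/2)
       = (4/21) powr (1 - 2*\<rho>) * c1 * g * n powr (-\<rho>) / (sqrt 2 * C * L powr ((1 - 2*\<rho>)/2))"
proof -
  define e where "e = 1 - 2*\<rho>"
  have e: "e > 0" using assms unfolding e_def by simp
  have pC: "c1 / (sqrt 2 * C) > 0" using assms by simp
  have a1: "((4/21::real)^2) powr (e/2) = (4/21) powr e"
  proof -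
    have "((4/21::real) powr 2) powr (e/2) = (4/21) powr (2*(e/2))" by (rule powr_powr)
    moreover have "(4/21::real) powr 2 = (4/21)^2" by (rule powr_numeral) simp
    ultimately show ?thesis by simp
  qed
  have a2: "((c1 / (sqrt 2 * C)) powr (2/e)) powr (e/2) = c1 / (sqrt 2 * C)"
    using e pC assms by (simp add: powr_powr)
  have a3: "(g powr (2/e)) powr (e/2) = g"
    using e assms by (simp add: powr_powr)
  have a4: "(n powr (-2*\<rho>/e)) powr (e/2) = n powr (-\<rho>)"
    using e assms by (simp add: powr_powr)
  have "(C2 c1 C \<rho> * g powr (2 / e) / L * n powr (- 2 * \<rho> / e)) powr (e/2)
      = ((4/21::real)^2) powr (e/2) * ((c1 / (sqrt 2 * C)) powr (2/e)) powr (e/2)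
        * (g powr (2/e)) powr (e/2) / L powr (e/2) * (n powr (-2*\<rho>/e)) powr (e/2)"
    unfolding C2_def e_def[symmetric] using assms pC
    by (simp add: powr_mult powr_divide)
  also have "\<dots> = (4/21) powr e * c1 * g * n powr (-\<rho>) / (sqrt 2 * C * L powr (e/2))"
    unfolding a1 a2 a3 a4 by simp
  finally show ?thesis unfolding e_def .
qed


lemma key:
  fixes \<gamma> \<rho> C c1 c2 \<delta> :: real and b :: "real \<Rightarrow> real" and n k :: nat
  assumes "\<gamma> > 0" "\<rho> < 0" "C > 0"
    and hb: "\<forall>t>0. bsup b t \<le> ereal (C * t powr \<rho>)"
    and "0 < c1" "0 < c2" "c2 \<le> 2"
    and hV: "\<forall>k\<ge>1. \<forall>d. 0 < d \<and> d < 1 \<longrightarrow>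
           Vq k d \<ge> c1 * (sqrt (max 0 (ln (c2 / d)) / real k) + ln (c2 / d) / real k)"
    and "n \<ge> 1" "k \<ge> 1"
    and "0 < \<delta>" "\<delta> < 1" "\<delta> \<le> c2\<^sup>2 / 4"
    and hk: "real k + 1 < C2 c1 C \<rho> * \<gamma> powr (2 / (1 - 2 * \<rho>)) / ln (4 / \<delta>)
                 * real n powr (- 2 * \<rho> / (1 - 2 * \<rho>))"
  shows "Bk b k n \<delta> \<le> \<gamma> * Vq k \<delta>"
proof -
  define L where "L = ln (4 / \<delta>)"
  define L2 where "L2 = ln (2 / \<delta>)"
  define a where "a = ln (c2 / \<delta>)"
  define V1 where "V1 = Vt 1 (\<delta> / 2)"
  define R1 where "R1 = Rk 1 (\<delta> / 2)"
  define k2 where "k2 = real k + 1"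
  have k2: "k2 > 0" "real k < k2" unfolding k2_def by auto
  have L1: "L \<ge> 1"
  proof -
    have "4 < 4 / \<delta>" using \<open>0 < \<delta>\<close> \<open>\<delta> < 1\<close> by (simp add: field_simps)
    then have "exp 1 \<le> 4 / \<delta>" using exp_le by linarith
    then show ?thesis unfolding L_def using \<open>0 < \<delta>\<close> by (simp add: ln_ge_iff)
  qed
  have L2: "0 \<le> L2" "L2 \<le> L" unfolding L2_def L_def using \<open>0 < \<delta>\<close> \<open>\<delta> < 1\<close>
    by (auto intro!: divide_right_mono)
  have V1e: "V1 = sqrt (2 * L) + L" unfolding V1_def Vt_def L_def by simp
  have R1e: "R1 = sqrt (3 * L2) + 3 * L2" unfolding R1_def Rk_def L2_def by simp
  have sqle: "sqrt x \<le> x" if "x \<ge> 1" for x :: real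
  proof -
    have s: "1 \<le> sqrt x" using that by simp
    have "sqrt x * 1 \<le> sqrt x * sqrt x" using s by (intro mult_left_mono) auto
    then show ?thesis using that by simp
  qed
  have V1b: "0 \<le> V1" "(1+V1)*(4/21) \<le> L"
    using sqle[of "2*L"] L1 by (auto simp: V1e)
  have s3: "sqrt (3*L2) \<le> sqrt (3*L)" using L2 by simp
  have s4: "sqrt (3*L) \<le> 3*L" using sqle[of "3*L"] L1 by simp
  have s5: "1 + R1 \<le> 1 + 3*L + 3*L" "0 \<le> R1" unfolding R1e using s3 s4 L2 by (auto intro: add_nonneg_nonneg) (use s3 s4 L2 in linarith)+
  have R1b: "0 \<le> R1" "(1+R1)*(4/21)^2 \<le> L"
    using s5 L1 by (auto simp: power2_eq_square)
  have hk2: "k2 powr ((1 - 2*\<rho>)/2) < (4/21) powr (1 - 2*\<rho>) * c1 * \<gamma> * real n powr (-\<rho>)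
       / (sqrt 2 * C * L powr ((1 - 2*\<rho>)/2))"
  proof -
    have "k2 powr ((1 - 2*\<rho>)/2) < (C2 c1 C \<rho> * \<gamma> powr (2 / (1 - 2 * \<rho>)) / L
                 * real n powr (- 2 * \<rho> / (1 - 2 * \<rho>))) powr ((1 - 2*\<rho>)/2)"
      using hk k2 \<open>\<rho> < 0\<close> unfolding k2_def L_def by (intro powr_less_mono2) auto
    also have "\<dots> = (4/21) powr (1 - 2*\<rho>) * c1 * \<gamma> * real n powr (-\<rho>)
       / (sqrt 2 * C * L powr ((1 - 2*\<rho>)/2))"
      using assms L1 by (intro Tpow) auto
    finally show ?thesis .
  qed
  have main: "(1+V1) * C * (k2*(1+R1)/real n) powr (-\<rho>) \<le> \<gamma> * c1 * sqrt L / (sqrt 2 * sqrt k2)"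
    apply (rule core)
    using assms L1 V1b R1b k2 hk2 by auto
  have "Bk b k n \<delta> = (1+V1) * bbar b (real n / (k2 * (1 + R1)))"
    unfolding Bk_def V1_def R1_def k2_def by (simp add: add.commute)
  also have "\<dots> \<le> (1+V1) * (C * (real n / (k2 * (1 + R1))) powr \<rho>)"
    using V1b R1b k2 assms by (intro mult_left_mono bbar_le[OF hb]) auto
  also have "(real n / (k2 * (1 + R1))) powr \<rho> = (k2*(1+R1)/real n) powr (-\<rho>)"
    using V1b R1b k2 assms by (simp add: powr_minus_divide powr_divide)
  also have "(1+V1) * (C * (k2*(1+R1)/real n) powr (-\<rho>)) \<le> \<gamma> * c1 * sqrt L / (sqrt 2 * sqrt k2)"
    using main by (simp add: mult.assoc)
  also have "\<dots> \<le> \<gamma> * (c1 * sqrt (L / (2 * real k)))"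
  proof -
    have "sqrt L / (sqrt 2 * sqrt k2) \<le> sqrt L / (sqrt 2 * sqrt (real k))"
      using k2 L1 \<open>k \<ge> 1\<close> by (intro divide_left_mono mult_left_mono) auto
    also have "\<dots> = sqrt (L / (2 * real k))" by (simp add: real_sqrt_divide real_sqrt_mult)
    finally show ?thesis using assms
      by (metis mult.assoc mult_left_mono times_divide_eq_right less_eq_real_def mult_pos_pos)
  qed
  also have "\<dots> \<le> \<gamma> * Vq k \<delta>"
  proof -
    have "c2 / \<delta> > 0" using assms by simp
    have "(c2/\<delta>)^2 \<ge> 4 / \<delta>"
      using assms by (simp add: power_divide field_simps power2_eq_square)
    then have "ln ((c2/\<delta>)^2) \<ge> L" unfolding L_def using assms by simp
    then have aL: "2 * a \<ge> L" unfolding a_def using \<open>c2 / \<delta> > 0\<close> by (simp add: ln_realpow)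
    have "sqrt (L / (2 * real k)) \<le> sqrt (max 0 a / real k) + a / real k"
    proof -
      have "sqrt (L / (2 * real k)) \<le> sqrt (max 0 a / real k)"
        using aL L1 \<open>k \<ge> 1\<close> by (simp add: divide_simps)
      moreover have "a / real k \<ge> 0" using aL L1 by simp
      ultimately show ?thesis by linarith
    qed
    then have "c1 * sqrt (L / (2 * real k)) \<le> Vq k \<delta>"
      using hV[rule_format, of k \<delta>] assms unfolding a_def
      by (smt (verit) mult_left_mono)
    then show ?thesis using assms by simp
  qed
  finally show ?thesis .
qed

theorem proposition4:
  fixes \<gamma> \<rho> C c1 c2 \<delta> \<beta> :: real and F b :: "real \<Rightarrow> real"
    and n :: nat and K :: "nat set"
  assumes "\<gamma> > 0" "\<rho> < 0" "C > 0"
    and "is_cdf F" and "von_mises F \<gamma> b"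
    and "\<forall>t>0. bsup b t \<le> ereal (C * t powr \<rho>)"
    and "0 < c1" "c1 \<le> 1" "0 < c2" "c2 \<le> 2"
    and "\<forall>k\<ge>1. \<forall>d. 0 < d \<and> d < 1 \<longrightarrow>
           Vq k d \<ge> c1 * (sqrt (max 0 (ln (c2 / d)) / real k) + ln (c2 / d) / real k)"
    and "n \<ge> 1" and "K \<subseteq> {1..n}" and "K \<noteq> {}"
    and "0 < \<delta>" "\<delta> < 1" "\<delta> \<le> c2\<^sup>2 / 4"
    and "Bk b (Min K) n \<delta> \<le> \<gamma> * Vq (Min K) \<delta>"
    and "Bk b (Max K) n \<delta> > \<gamma> * Vq (Max K) \<delta>"
    and "\<beta> > 1"
    and "\<forall>k\<in>K. k \<noteq> Max K \<longrightarrow> real (Min {j\<in>K. j > k}) / real k \<le> \<beta>"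
    and "real n / 2 \<ge> (1 / \<beta>) * (C2 c1 C \<rho> * \<gamma> powr (2 / (1 - 2 * \<rho>)) / ln (4 / \<delta>)
                 * real n powr (- 2 * \<rho> / (1 - 2 * \<rho>)) - 1)"
  shows "real (kstar b \<gamma> K n \<delta>) \<ge> (1 / \<beta>) * (C2 c1 C \<rho> * \<gamma> powr (2 / (1 - 2 * \<rho>))
                 / ln (4 / \<delta>) * real n powr (- 2 * \<rho> / (1 - 2 * \<rho>)) - 1)"
proof -
  define T where "T = C2 c1 C \<rho> * \<gamma> powr (2 / (1 - 2 * \<rho>)) / ln (4 / \<delta>)
                 * real n powr (- 2 * \<rho> / (1 - 2 * \<rho>))"
  define S where "S = {k\<in>K. Bk b k n \<delta> \<le> \<gamma> * Vq k \<delta>}"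
  have fK: "finite K" using assms(13) finite_subset by blast
  have fS: "finite S" unfolding S_def using fK by simp
  have MinS: "Min K \<in> S" unfolding S_def using assms(14,18) fK by simp
  define ks where "ks = Max S"
  have ksS: "ks \<in> S" unfolding ks_def using fS MinS by (intro Max_in) auto
  have ksK: "ks \<in> K" using ksS unfolding S_def by simp
  have ks1: "ks \<ge> 1" using ksK assms(13) by auto
  have kstar: "kstar b \<gamma> K n \<delta> = ks" unfolding kstar_def ks_def S_def by simp
  have MaxK: "Max K \<notin> S" unfolding S_def using assms(19) by simp
  have ksne: "ks \<noteq> Max K" using ksS MaxK by auto
  have kslt: "ks < Max K" using ksne ksK fK by (simp add: order_less_le)
  define k' where "k' = Min {j\<in>K. j > ks}"
  have ne: "{j\<in>K. j > ks} \<noteq> {}" using kslt fK assms(14) Max_in[OF fK assms(14)] by blast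
  have k'in: "k' \<in> {j\<in>K. j > ks}" unfolding k'_def using ne fK by (intro Min_in) auto
  have k'S: "k' \<notin> S"
  proof
    assume "k' \<in> S"
    then have "k' \<le> ks" unfolding ks_def using fS by simp
    then show False using k'in by simp
  qed
  have k'1: "k' \<ge> 1" using k'in assms(13) by auto
  have k'B: "\<not> Bk b k' n \<delta> \<le> \<gamma> * Vq k' \<delta>" using k'S k'in unfolding S_def by simp
  have k'T: "real k' + 1 \<ge> T"
  proof (rule ccontr)
    assume "\<not> real k' + 1 \<ge> T"
    then have "real k' + 1 < T" by simp
    then have "Bk b k' n \<delta> \<le> \<gamma> * Vq k' \<delta>"
      unfolding T_def using assms k'1 by (intro key[of \<gamma> \<rho> C b c1 c2]) auto
    then show False using k'B by simp
  qed
  have "real k' / real ks \<le> \<beta>" using assms(21) ksK ksne unfolding k'_def by blast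
  then have k'b: "real k' \<le> \<beta> * real ks" using ks1 by (simp add: divide_simps)
  have "(1 / \<beta>) * (T - 1) \<le> (1/\<beta>) * real k'" using k'T assms(20) by (intro mult_left_mono) auto
  also have "\<dots> \<le> real ks" using k'b assms(20) by (simp add: field_simps)
  finally show ?thesis unfolding kstar T_def .
qed

end
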